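(* Let $a>3$ be irrational and $t$ a positive integer, and let $U$, $D$ be as follows: $U = \#\{(x,y)\in\mathbb{Z}^2 : x \ge 0,\ x + a y \ge t(a+3)/12,\ x + 3y \le t/2\}$ and $D = \#\{(x,y)\in\mathbb{Z}^2 : y \ge 0,\ x + 3y \ge t/2,\ x + a y \le t(a+3)/12\}$. Let $d(t) = \lceil t/12\rceil$ if $t$ is even and $d(t)=0$ if $t$ is odd. Then \[ L_{\mathcal{T}_{\frac{a+3}{12},\,\frac{a+3}{12a}}}(t) = L_{\mathcal{T}_{1/2,\,1/6}}(t) + D - U - d(t). \]
   Context: For $u,v>0$, $\mathcal{T}_{u,v}$ denotes the closed triangle with vertices $(0,0)$, $(u,0)$, $(0,v)$, and its Ehrhart function is $L_{\mathcal{T}_{u,v}}(t) = \#\left(\mathbb{Z}^2 \cap \mathcal{T}_{tu,tv}\right)$ for positive integers $t$. Here $d(t)$ equals the number of lattice points on the segment of the line $2x+6y=t$ with $0\le y<t/12$. *)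

theory Defs
  imports Complex_Main
begin

definition triangle :: "real \<Rightarrow> real \<Rightarrow> (real \<times> real) set" where
  "triangle u v = {(x, y). x \<ge> 0 \<and> y \<ge> 0 \<and> v * x + u * y \<le> u * v}"

definition ehrhart_triangle :: "real \<Rightarrow> real \<Rightarrow> nat \<Rightarrow> nat" where
  "ehrhart_triangle u v t =
     card {p :: int \<times> int. (real_of_int (fst p), real_of_int (snd p)) \<in> triangle (real t * u) (real t * v)}"

end

theory Submission imports Defs begin
lemma l1: "(real_of_int x + 3 * real_of_int y \<le> real t / 2) \<longleftrightarrow> 2*x+6*y \<le> int t"
proof -
  have "(real_of_int x + 3 * real_of_int y \<le> real t / 2) \<longleftrightarrow> real_of_int (2*x+6*y) \<le> real_of_int (int t)" by simp linarith
  then show ?thesis by linarith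
qed
lemma l2: "(real_of_int x + 3 * real_of_int y \<ge> real t / 2) \<longleftrightarrow> 2*x+6*y \<ge> int t"
proof -
  have "(real_of_int x + 3 * real_of_int y \<ge> real t / 2) \<longleftrightarrow> real_of_int (2*x+6*y) \<ge> real_of_int (int t)" by simp linarith
  then show ?thesis by linarith
qed

lemma key: fixes a::real assumes "a > 3" "real_of_int x + 3*real_of_int y = real t / 2"
  shows "real_of_int x + a * real_of_int y \<le> real t * (a+3)/12 \<longleftrightarrow> 12*y \<le> int t"
proof -
  have "real_of_int x + a * real_of_int y \<le> real t * (a+3)/12 \<longleftrightarrow> (a-3)*(12*real_of_int y - real t) \<le> 0"
    using assms(2) by (simp add: algebra_simps) linarith
  also have "\<dots> \<longleftrightarrow> 12*real_of_int y - real t \<le> 0" using assms(1) by (simp add: mult_le_0_iff)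
  also have "\<dots> \<longleftrightarrow> 12*y \<le> int t" by linarith
  finally show ?thesis .
qed

lemma ybound: fixes a::real assumes "a > 3" "real_of_int x + 3*real_of_int y \<ge> real t / 2"
  "real_of_int x + a * real_of_int y \<le> real t * (a+3)/12"
  shows "12*real_of_int y \<le> real t"
proof -
  have "(a-3)*(12*real_of_int y - real t) \<le> 0" using assms(2,3) by (simp add: algebra_simps)
  thus ?thesis using assms(1) by (simp add: mult_le_0_iff)
qed

lemma ybound2: fixes a::real assumes "a > 3" "real_of_int x + 3*real_of_int y \<le> real t / 2"
  "real_of_int x + a * real_of_int y \<ge> real t * (a+3)/12"
  shows "12*real_of_int y \<ge> real t"
proof -
  have "(a-3)*(12*real_of_int y - real t) \<ge> 0" using assms(2,3) by (simp add: algebra_simps)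
  thus ?thesis using assms(1) by (simp add: zero_le_mult_iff)
qed

lemma irr: fixes a::real assumes "a \<notin> \<rat>" "real_of_int x + a * real_of_int y = real t * (a+3)/12"
  shows "12*y = int t \<and> 4*x = int t"
proof -
  have e: "(12*real_of_int y - real t) * a = 3*real t - 12*real_of_int x" using assms(2) by (simp add: field_simps)
  have "12*y = int t"
  proof (rule ccontr)
    assume "12*y \<noteq> int t"
    hence "12*real_of_int y - real t \<noteq> 0" by (metis (mono_tags) eq_iff_diff_eq_0 of_int_eq_iff of_int_of_nat_eq of_int_mult of_int_numeral)
    hence "a = (3*real t - 12*real_of_int x) / (12*real_of_int y - real t)" using e by (simp add: field_simps)
    moreover have "(3*real t - 12*real_of_int x) / (12*real_of_int y - real t) \<in> \<rat>" by simp
    ultimately show False using assms(1) by simp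
  qed
  moreover then have "4*x = int t"
  proof -
    assume h: "12*y = int t"
    hence "12*real_of_int y = real t" by (metis of_int_mult of_int_numeral of_int_of_nat_eq)
    hence "real_of_int (4*x) = real_of_int (int t)" using e by simp
    thus ?thesis by (simp only: of_int_eq_iff)
  qed
  ultimately show ?thesis by simp
qed

lemma ceil12: "\<lceil>real t / 12\<rceil> = int (t div 12) + (if 12 dvd t then 0 else 1)"
proof -
  define q where "q = t div 12"
  define r where "r = t mod 12"
  have tq: "t = 12*q + r" unfolding q_def r_def by simp
  have r12: "r < 12" unfolding r_def by simp
  have rt: "real t / 12 = real q + real r / 12" using tq by (simp add: field_simps)
  show ?thesis
  proof (cases "r = 0")
    case True
    hence "12 dvd t" using tq by simp
    thus ?thesis using rt True q_def by simp
  next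
    case False
    hence nd: "\<not> 12 dvd t" unfolding r_def by auto
    have "real r / 12 > 0" "real r / 12 \<le> 1" using False r12 by auto
    hence "\<lceil>real t / 12\<rceil> = int q + 1" unfolding rt by (subst ceiling_eq_iff) auto
    thus ?thesis using nd q_def by simp
  qed
qed

theorem mainTheorem14:
  fixes a :: real and t :: nat
  assumes "a > 3" and "a \<notin> \<rat>" and "t > 0"
  defines "U \<equiv> card {(x :: int, y :: int). x \<ge> 0 \<and>
                 real_of_int x + a * real_of_int y \<ge> real t * (a + 3) / 12 \<and>
                 real_of_int x + 3 * real_of_int y \<le> real t / 2}"
      and "D \<equiv> card {(x :: int, y :: int). y \<ge> 0 \<and>
                 real_of_int x + 3 * real_of_int y \<ge> real t / 2 \<and>
                 real_of_int x + a * real_of_int y \<le> real t * (a + 3) / 12}"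
      and "d \<equiv> (if even t then \<lceil>real t / 12\<rceil> else 0)"
  shows "int (ehrhart_triangle ((a + 3) / 12) ((a + 3) / (12 * a)) t)
         = int (ehrhart_triangle (1 / 2) (1 / 6) t) + int D - int U - d"
proof -
  define c where "c = real t * (a+3)/12"
  define S1 where "S1 = {(x::int,y::int). x\<ge>0 \<and> y\<ge>0 \<and> real_of_int x + a*real_of_int y \<le> c}"
  define S2 where "S2 = {(x::int,y::int). x\<ge>0 \<and> y\<ge>0 \<and> 2*x+6*y \<le> int t}"
  define DS where "DS = {(x :: int, y :: int). y \<ge> 0 \<and>
                 real_of_int x + 3 * real_of_int y \<ge> real t / 2 \<and>
                 real_of_int x + a * real_of_int y \<le> real t * (a + 3) / 12}"
  define US where "US = {(x :: int, y :: int). x \<ge> 0 \<and>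
                 real_of_int x + a * real_of_int y \<ge> real t * (a + 3) / 12 \<and>
                 real_of_int x + 3 * real_of_int y \<le> real t / 2}"
  have Deq: "D = card DS" unfolding D_def DS_def by simp
  have Ueq: "U = card US" unfolding U_def US_def by simp
  have tpos: "real t > 0" using assms(3) by simp
  have e1: "ehrhart_triangle ((a + 3) / 12) ((a + 3) / (12 * a)) t = card S1"
  proof -
    define k where "k = real t * (a+3)/(12*a)"
    have kpos: "k > 0" unfolding k_def using assms(1) tpos by simp
    have ka: "real t * ((a+3)/12) = k*a" "real t * ((a + 3) / (12 * a)) = k" "c = k*a"
      unfolding k_def c_def using assms(1) by (auto simp: field_simps)
    have "\<And>X Y. (real t * ((a + 3) / (12 * a)) * X + real t * ((a + 3) / 12) * Y
          \<le> real t * ((a + 3) / 12) * (real t * ((a + 3) / (12 * a)))) \<longleftrightarrow> X + a*Y \<le> c"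
    proof -
      fix X Y
      have "(real t * ((a + 3) / (12 * a)) * X + real t * ((a + 3) / 12) * Y
          \<le> real t * ((a + 3) / 12) * (real t * ((a + 3) / (12 * a)))) \<longleftrightarrow> k*(X + a*Y) \<le> k*c"
        unfolding ka by (simp add: algebra_simps)
      also have "\<dots> \<longleftrightarrow> X + a*Y \<le> c" using kpos by simp
      finally show "(real t * ((a + 3) / (12 * a)) * X + real t * ((a + 3) / 12) * Y
          \<le> real t * ((a + 3) / 12) * (real t * ((a + 3) / (12 * a)))) \<longleftrightarrow> X + a*Y \<le> c" .
    qed
    thus ?thesis unfolding ehrhart_triangle_def triangle_def S1_def
      by (intro arg_cong[where f=card]) auto
  qed
  have e2: "ehrhart_triangle (1/2) (1/6) t = card S2"
  proof -
    have "\<And>X Y::int. (real t * (1/6) * real_of_int X + real t * (1/2) * real_of_int Y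
          \<le> real t * (1/2) * (real t * (1/6))) \<longleftrightarrow> 2*X+6*Y \<le> int t"
    proof -
      fix X Y :: int
      have "(real t * (1/6) * real_of_int X + real t * (1/2) * real_of_int Y
          \<le> real t * (1/2) * (real t * (1/6))) \<longleftrightarrow> (real t/6) * real_of_int (2*X+6*Y) \<le> (real t/6) * real t"
        by (simp add: algebra_simps)
      also have "\<dots> \<longleftrightarrow> real_of_int (2*X+6*Y) \<le> real_of_int (int t)" using tpos by simp
      also have "\<dots> \<longleftrightarrow> 2*X+6*Y \<le> int t" by (simp only: of_int_le_iff)
      finally show "(real t * (1/6) * real_of_int X + real t * (1/2) * real_of_int Y
          \<le> real t * (1/2) * (real t * (1/6))) \<longleftrightarrow> 2*X+6*Y \<le> int t" .
    qed
    thus ?thesis unfolding ehrhart_triangle_def triangle_def S2_def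
      by (intro arg_cong[where f=card]) auto
  qed
  have fin2: "finite S2"
  proof (rule finite_subset)
    show "S2 \<subseteq> {0..int t} \<times> {0..int t}" unfolding S2_def by auto
  qed simp
  have fin1: "finite S1"
  proof (rule finite_subset)
    show "S1 \<subseteq> {0..\<lceil>c\<rceil>} \<times> {0..\<lceil>c\<rceil>}"
    proof
      fix p assume "p \<in> S1"
      then obtain x y where p: "p = (x,y)" "x \<ge> 0" "y \<ge> 0" "real_of_int x + a*real_of_int y \<le> c"
        unfolding S1_def by auto
      have "(a-1)*real_of_int y \<ge> 0" using assms(1) p(3) by simp
      hence ay: "a * real_of_int y \<ge> real_of_int y" by (simp add: algebra_simps)
      have y0: "real_of_int y \<ge> 0" using p(3) by simp
      have "real_of_int x \<le> c" "real_of_int y \<le> c" using p(2,4) ay y0 by linarith+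
      hence "real_of_int x \<le> real_of_int \<lceil>c\<rceil>" "real_of_int y \<le> real_of_int \<lceil>c\<rceil>"
        using le_of_int_ceiling[of c] by linarith+
      hence "x \<le> \<lceil>c\<rceil>" "y \<le> \<lceil>c\<rceil>" by (simp_all only: of_int_le_iff)
      thus "p \<in> {0..\<lceil>c\<rceil>} \<times> {0..\<lceil>c\<rceil>}" using p by auto
    qed
  qed simp
  have DS1: "DS \<subseteq> S1"
  proof
    fix p assume "p \<in> DS"
    then obtain x y where p: "p = (x,y)" "y \<ge> 0" "real_of_int x + 3*real_of_int y \<ge> real t / 2"
      "real_of_int x + a * real_of_int y \<le> real t * (a + 3) / 12" unfolding DS_def by auto
    have "12*real_of_int y \<le> real t" using ybound[OF assms(1) p(3,4)] .
    hence "real_of_int x \<ge> 0" using p(3) by linarith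
    thus "p \<in> S1" using p unfolding S1_def c_def by auto
  qed
  have DSd: "DS - S2 = S1 - S2"
  proof -
    have sub: "S1 - S2 \<subseteq> DS"
    proof
      fix p assume "p \<in> S1 - S2"
      then obtain x y where p: "p = (x,y)" "x\<ge>0" "y\<ge>0" "real_of_int x + a*real_of_int y \<le> c"
        "\<not> 2*x+6*y \<le> int t" unfolding S1_def S2_def by auto
      hence "real_of_int x + 3*real_of_int y \<ge> real t / 2" using l2[of t x y] by simp
      thus "p \<in> DS" using p unfolding DS_def c_def by simp
    qed
    show ?thesis using sub DS1 by auto
  qed
  have US2: "US \<subseteq> S2"
  proof
    fix p assume "p \<in> US"
    then obtain x y where p: "p = (x,y)" "x \<ge> 0" "real_of_int x + 3*real_of_int y \<le> real t / 2"
      "real_of_int x + a * real_of_int y \<ge> real t * (a + 3) / 12" unfolding US_def by auto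
    have "12*real_of_int y \<ge> real t" using ybound2[OF assms(1) p(3,4)] .
    hence "y \<ge> 0" using tpos by linarith
    thus "p \<in> S2" using p l1[of x y t] unfolding S2_def by auto
  qed
  have USd: "US - S1 = S2 - S1"
  proof -
    have sub: "S2 - S1 \<subseteq> US"
    proof
      fix p assume "p \<in> S2 - S1"
      then obtain x y where p: "p = (x,y)" "x\<ge>0" "y\<ge>0" "\<not> real_of_int x + a*real_of_int y \<le> c"
        "2*x+6*y \<le> int t" unfolding S1_def S2_def by auto
      hence "real_of_int x + 3*real_of_int y \<le> real t / 2" using l1[of x y t] by simp
      thus "p \<in> US" using p unfolding US_def c_def by simp
    qed
    show ?thesis using sub US2 by auto
  qed
  have DI: "DS \<inter> S2 = (if even t then (\<lambda>y. (int t div 2 - 3*y, y)) ` {0..int t div 12} else {})"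
  proof
    show "DS \<inter> S2 \<subseteq> (if even t then (\<lambda>y. (int t div 2 - 3*y, y)) ` {0..int t div 12} else {})"
    proof
      fix p assume "p \<in> DS \<inter> S2"
      then obtain x y where p: "p = (x,y)" "y \<ge> 0" "real_of_int x + 3*real_of_int y \<ge> real t / 2"
        "real_of_int x + a * real_of_int y \<le> real t * (a + 3) / 12" "2*x+6*y \<le> int t"
        unfolding DS_def S2_def by auto
      have eq: "2*x+6*y = int t" using p(3,5) l2[of t x y] by simp
      have "int t = 2*(x+3*y)" using eq by simp
      hence "even (int t)" by simp
      hence ev: "even t" by simp
      have "real_of_int x + 3*real_of_int y = real t / 2"
      proof -
        have "real_of_int (2*x+6*y) = real_of_int (int t)" using eq by simp
        thus ?thesis by simp
      qed
      hence "12*y \<le> int t" using key[OF assms(1)] p(4) by blast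
      hence "y \<le> int t div 12" by linarith
      moreover have "x = int t div 2 - 3*y" using eq by linarith
      ultimately show "p \<in> (if even t then (\<lambda>y. (int t div 2 - 3*y, y)) ` {0..int t div 12} else {})"
        using ev p(1,2) by auto
    qed
    show "(if even t then (\<lambda>y. (int t div 2 - 3*y, y)) ` {0..int t div 12} else {}) \<subseteq> DS \<inter> S2"
    proof (cases "even t")
      case True
      show ?thesis
      proof
        fix p assume "p \<in> (if even t then (\<lambda>y. (int t div 2 - 3*y, y)) ` {0..int t div 12} else {})"
        then obtain y where p: "p = (int t div 2 - 3*y, y)" "0 \<le> y" "y \<le> int t div 12" using True by auto
        define x where "x = int t div 2 - 3*y"
        have eq: "2*x+6*y = int t" unfolding x_def using True by (simp add: even_iff_mod_2_eq_zero) presburger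
        have x0: "x \<ge> 0" unfolding x_def using p(3) by linarith
        have ty: "12*y \<le> int t" using p(3) by linarith
        have r: "real_of_int x + 3*real_of_int y = real t / 2"
        proof -
          have "real_of_int (2*x+6*y) = real_of_int (int t)" using eq by simp
          thus ?thesis by simp
        qed
        have "real_of_int x + a * real_of_int y \<le> real t * (a + 3) / 12" using key[OF assms(1) r] ty by blast
        thus "p \<in> DS \<inter> S2" using p(1,2) x0 eq r unfolding DS_def S2_def x_def[symmetric] by auto
      qed
    qed simp
  qed
  have UI: "US \<inter> S1 = (if 12 dvd t then {(int t div 4, int t div 12)} else {})"
  proof
    show "US \<inter> S1 \<subseteq> (if 12 dvd t then {(int t div 4, int t div 12)} else {})"
    proof
      fix p assume "p \<in> US \<inter> S1"
      then obtain x y where p: "p = (x,y)"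
        "real_of_int x + a * real_of_int y \<ge> real t * (a + 3) / 12"
        "real_of_int x + a * real_of_int y \<le> c" unfolding US_def S1_def by auto
      have "real_of_int x + a * real_of_int y = real t * (a + 3) / 12" using p(2,3) unfolding c_def by linarith
      from irr[OF assms(2) this] have h: "12*y = int t" "4*x = int t" by auto
      hence "12 dvd t" by presburger
      thus "p \<in> (if 12 dvd t then {(int t div 4, int t div 12)} else {})" using h p(1) by auto
    qed
    show "(if 12 dvd t then {(int t div 4, int t div 12)} else {}) \<subseteq> US \<inter> S1"
    proof (cases "12 dvd t")
      case True
      then obtain q where q: "t = 12*q" by auto
      have "real_of_int (int t div 4) = 3*real q" "real_of_int (int t div 12) = real q" using q by simp_all
      moreover have "int t div 4 \<ge> 0" "int t div 12 \<ge> 0" by simp_all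
      ultimately show ?thesis using True q unfolding US_def S1_def c_def by (auto simp: algebra_simps)
    qed simp
  qed
  have c1: "card S1 = card (S1 \<inter> S2) + card (S1 - S2)" using card_Int_Diff[OF fin1] .
  have c2: "card S2 = card (S2 \<inter> S1) + card (S2 - S1)" using card_Int_Diff[OF fin2] .
  have finD: "finite DS" using DS1 fin1 finite_subset by blast
  have finU: "finite US" using US2 fin2 finite_subset by blast
  have c3: "card DS = card (DS \<inter> S2) + card (DS - S2)" using card_Int_Diff[OF finD] .
  have c4: "card US = card (US \<inter> S1) + card (US - S1)" using card_Int_Diff[OF finU] .
  have inj: "inj_on (\<lambda>y. (int t div 2 - 3*y, y)) {0..int t div 12}" by (auto simp: inj_on_def)
  have cDI: "card (DS \<inter> S2) = (if even t then nat (int t div 12 + 1) else 0)"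
    unfolding DI using card_image[OF inj] by simp
  have cUI: "card (US \<inter> S1) = (if 12 dvd t then 1 else 0)" unfolding UI by simp
  have fin: "int (card (DS \<inter> S2)) - int (card (US \<inter> S1)) = d"
  proof (cases "even t")
    case True
    thus ?thesis unfolding cDI cUI d_def using ceil12[of t] by (simp add: zdiv_int)
  next
    case False
    hence "\<not> 12 dvd t" by presburger
    thus ?thesis unfolding cDI cUI d_def using False by simp
  qed
  have S12: "S2 \<inter> S1 = S1 \<inter> S2" by auto
  show ?thesis unfolding e1 e2 Deq Ueq using c1 c2 c3 c4 DSd USd S12 fin by simp
qed
end
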